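(* Let $1\le p\le\infty$ and suppose that either (i) $X=\big(\bigoplus_{n\in\mathbb N}X_n\big)_{\ell^p}$ where $\mathcal K(X_n)/\mathcal A(X_n)\ne\{0\}$ for every $n\in\mathbb N$, or (ii) $X$ is a Banach space with $\mathcal K(X)/\mathcal A(X)\ne\{0\}$ and $\big(\bigoplus_{\mathbb N}X\big)_{\ell^p}$ linearly isomorphic to $X$. (For $p=\infty$ the direct sums are $c_0$-direct sums with the supremum norm.) Then $\mathcal K(X)/\mathcal A(X)$ contains a linear isomorphic copy of $c_0$.
   Context: $\mathcal K(X)$ denotes the compact operators on the Banach space $X$, $\mathcal A(X)$ the norm closure of the bounded finite rank operators on $X$, and $\mathcal K(X)/\mathcal A(X)$ the quotient Banach algebra with the quotient norm. *)

theory Defs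
  imports "HOL-Analysis.Analysis"
begin

text \<open>A Banach space is represented as a closed linear subspace V of a real Banach type.
  Operators on V are functions that are linear and bounded on V and map V into V
  (their values outside V are irrelevant).\<close>

definition linear_on :: "'a::real_vector set \<Rightarrow> ('a \<Rightarrow> 'a) \<Rightarrow> bool" where
  "linear_on V T \<longleftrightarrow> (\<forall>x\<in>V. \<forall>y\<in>V. T (x + y) = T x + T y) \<and> (\<forall>c. \<forall>x\<in>V. T (c *\<^sub>R x) = c *\<^sub>R T x)"

definition bounded_op :: "'a::real_normed_vector set \<Rightarrow> ('a \<Rightarrow> 'a) \<Rightarrow> bool" where
  "bounded_op V T \<longleftrightarrow> linear_on V T \<and> T ` V \<subseteq> V \<and> (\<exists>K. \<forall>x\<in>V. norm (T x) \<le> K * norm x)"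

definition opnorm :: "'a::real_normed_vector set \<Rightarrow> ('a \<Rightarrow> 'a) \<Rightarrow> real" where
  "opnorm V T = Sup ((\<lambda>x. norm (T x)) ` {x\<in>V. norm x \<le> 1})"

definition compact_op :: "'a::real_normed_vector set \<Rightarrow> ('a \<Rightarrow> 'a) \<Rightarrow> bool" where
  "compact_op V T \<longleftrightarrow> bounded_op V T \<and> compact (closure (T ` {x\<in>V. norm x \<le> 1}))"

definition finite_rank_op :: "'a::real_normed_vector set \<Rightarrow> ('a \<Rightarrow> 'a) \<Rightarrow> bool" where
  "finite_rank_op V T \<longleftrightarrow> bounded_op V T \<and> (\<exists>B. finite B \<and> T ` V \<subseteq> span B)"

definition approximable_op :: "'a::real_normed_vector set \<Rightarrow> ('a \<Rightarrow> 'a) \<Rightarrow> bool" where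
  "approximable_op V T \<longleftrightarrow> bounded_op V T \<and>
     (\<forall>e>0. \<exists>F. finite_rank_op V F \<and> opnorm V (\<lambda>x. T x - F x) < e)"

definition KA_nontrivial :: "'a::real_normed_vector set \<Rightarrow> bool" where
  "KA_nontrivial V \<longleftrightarrow> (\<exists>T. compact_op V T \<and> \<not> approximable_op V T)"

definition quot_norm :: "'a::real_normed_vector set \<Rightarrow> ('a \<Rightarrow> 'a) \<Rightarrow> real" where
  "quot_norm V T = Inf {opnorm V (\<lambda>x. T x - R x) | R. approximable_op V R}"

definition c0 :: "(nat \<Rightarrow> real) set" where
  "c0 = {a. a \<longlonglongrightarrow> 0}"

definition sup_norm :: "(nat \<Rightarrow> real) \<Rightarrow> real" where
  "sup_norm a = Sup (range (\<lambda>n. \<bar>a n\<bar>))"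

text \<open>\<open>\<K>(V)/\<A>(V)\<close> contains a linear isomorphic copy of \<open>c\<^sub>0\<close>: there is a map J from
  \<open>c\<^sub>0\<close> into \<open>\<K>(V)\<close> which is linear modulo \<open>\<A>(V)\<close> (i.e. linear as a map into the
  quotient) and is bounded above and below with respect to the quotient norm.\<close>
definition KA_contains_c0 :: "'a::real_normed_vector set \<Rightarrow> bool" where
  "KA_contains_c0 V \<longleftrightarrow> (\<exists>(J :: (nat \<Rightarrow> real) \<Rightarrow> 'a \<Rightarrow> 'a) c C. 0 < c \<and>
     (\<forall>a\<in>c0. compact_op V (J a)) \<and>
     (\<forall>a\<in>c0. \<forall>b\<in>c0. \<forall>\<alpha> \<beta>.
        approximable_op V (\<lambda>x. J (\<lambda>n. \<alpha> * a n + \<beta> * b n) x - (\<alpha> *\<^sub>R J a x + \<beta> *\<^sub>R J b x))) \<and>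
     (\<forall>a\<in>c0. c * sup_norm a \<le> quot_norm V (J a) \<and> quot_norm V (J a) \<le> C * sup_norm a))"

definition lp_sum :: "ereal \<Rightarrow> (nat \<Rightarrow> 'b::real_normed_vector set) \<Rightarrow> (nat \<Rightarrow> 'b) set" where
  "lp_sum p Vs = {f. (\<forall>n. f n \<in> Vs n) \<and>
     (if p = \<infinity> then (\<lambda>n. norm (f n)) \<longlonglongrightarrow> 0
      else summable (\<lambda>n. norm (f n) powr real_of_ereal p))}"

definition lp_sum_norm :: "ereal \<Rightarrow> (nat \<Rightarrow> 'b::real_normed_vector) \<Rightarrow> real" where
  "lp_sum_norm p f = (if p = \<infinity> then Sup (range (\<lambda>n. norm (f n)))
     else (\<Sum>n. norm (f n) powr real_of_ereal p) powr (1 / real_of_ereal p))"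

definition lin_bij_to_lp_sum :: "ereal \<Rightarrow> (nat \<Rightarrow> 'b::real_normed_vector set) \<Rightarrow> ('a::real_normed_vector \<Rightarrow> nat \<Rightarrow> 'b) \<Rightarrow> bool" where
  "lin_bij_to_lp_sum p Vs U \<longleftrightarrow> bij_betw U UNIV (lp_sum p Vs) \<and>
     (\<forall>x y. U (x + y) = (\<lambda>n. U x n + U y n)) \<and> (\<forall>c x. U (c *\<^sub>R x) = (\<lambda>n. c *\<^sub>R U x n))"

definition isometric_to_lp_sum :: "'a::real_normed_vector itself \<Rightarrow> ereal \<Rightarrow> (nat \<Rightarrow> 'b::real_normed_vector set) \<Rightarrow> bool" where
  "isometric_to_lp_sum _ p Vs \<longleftrightarrow> (\<exists>U :: 'a \<Rightarrow> nat \<Rightarrow> 'b. lin_bij_to_lp_sum p Vs U \<and> (\<forall>x. lp_sum_norm p (U x) = norm x))"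

definition isomorphic_to_lp_sum :: "'a::real_normed_vector itself \<Rightarrow> ereal \<Rightarrow> (nat \<Rightarrow> 'b::real_normed_vector set) \<Rightarrow> bool" where
  "isomorphic_to_lp_sum _ p Vs \<longleftrightarrow> (\<exists>(U :: 'a \<Rightarrow> nat \<Rightarrow> 'b) c C. lin_bij_to_lp_sum p Vs U \<and> 0 < c \<and>
     (\<forall>x. c * norm x \<le> lp_sum_norm p (U x) \<and> lp_sum_norm p (U x) \<le> C * norm x))"

end

theory Submission
  imports Defs
begin

definition tbd :: "'a::metric_space set \<Rightarrow> bool" where
  "tbd S \<longleftrightarrow> (\<forall>e>0. \<exists>k. finite k \<and> k \<subseteq> S \<and> S \<subseteq> (\<Union>x\<in>k. ball x e))"

lemma tbI:
  fixes S :: "'a::metric_space set"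
  assumes "\<And>e. e > 0 \<Longrightarrow> \<exists>k. finite k \<and> S \<subseteq> (\<Union>x\<in>k. ball x e)"
  shows "tbd S"
  unfolding tbd_def
proof (intro allI impI)
  fix e :: real assume e: "e > 0"
  then obtain k where k: "finite k" "S \<subseteq> (\<Union>x\<in>k. ball x (e/2))"
    using assms[of "e/2"] by auto
  define k0 where "k0 = {x\<in>k. \<exists>y\<in>S. dist x y < e/2}"
  define g where "g = (\<lambda>x. SOME y. y \<in> S \<and> dist x y < e/2)"
  have g: "g x \<in> S \<and> dist x (g x) < e/2" if "x \<in> k0" for x
    using that unfolding k0_def g_def by (metis (mono_tags, lifting) mem_Collect_eq someI_ex)
  show "\<exists>k. finite k \<and> k \<subseteq> S \<and> S \<subseteq> (\<Union>x\<in>k. ball x e)"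
  proof (intro exI conjI)
    show "finite (g ` k0)" using k(1) unfolding k0_def by auto
    show "g ` k0 \<subseteq> S" using g by auto
    show "S \<subseteq> (\<Union>x\<in>g ` k0. ball x e)"
    proof
      fix y assume y: "y \<in> S"
      then obtain x where x: "x \<in> k" "dist x y < e/2" using k(2) by auto
      then have x0: "x \<in> k0" using y unfolding k0_def by auto
      have "dist (g x) y \<le> dist (g x) x + dist x y" by (rule dist_triangle)
      also have "\<dots> < e" using g[OF x0] x(2) by (simp add: dist_commute)
      finally show "y \<in> (\<Union>x\<in>g ` k0. ball x e)" using x0 by auto
    qed
  qed
qed

lemma tbd_subset:
  assumes "tbd S" "T \<subseteq> S" shows "tbd T"
proof (rule tbI)
  fix e :: real assume "e > 0"
  then obtain k where "finite k" "S \<subseteq> (\<Union>x\<in>k. ball x e)"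
    using assms(1) unfolding tbd_def by meson
  then show "\<exists>k. finite k \<and> T \<subseteq> (\<Union>x\<in>k. ball x e)" using assms(2) by blast
qed

lemma tbd_compact_closure:
  fixes S :: "'a::complete_space set"
  assumes "tbd S" shows "compact (closure S)"
  unfolding compact_eq_totally_bounded
proof (intro conjI allI impI)
  show "complete (closure S)" by (simp add: complete_eq_closed)
  fix e :: real assume e: "e > 0"
  then obtain k where k: "finite k" "k \<subseteq> S" "S \<subseteq> (\<Union>x\<in>k. ball x (e/2))"
    using assms unfolding tbd_def by (meson half_gt_zero)
  show "\<exists>k. finite k \<and> closure S \<subseteq> (\<Union>x\<in>k. ball x e)"
  proof (intro exI conjI)
    show "finite k" by fact
    show "closure S \<subseteq> (\<Union>x\<in>k. ball x e)"
    proof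
      fix y assume "y \<in> closure S"
      then obtain s where s: "s \<in> S" "dist s y < e/2"
        using e by (metis closure_approachable half_gt_zero dist_commute)
      then obtain x where x: "x \<in> k" "dist x s < e/2" using k(3) by auto
      have "dist x y \<le> dist x s + dist s y" by (rule dist_triangle)
      also have "\<dots> < e" using s x by simp
      finally show "y \<in> (\<Union>x\<in>k. ball x e)" using x by auto
    qed
  qed
qed

lemma compact_closure_tbd:
  fixes S :: "'a::metric_space set"
  assumes "compact (closure S)" shows "tbd S"
proof (rule tbI)
  fix e :: real assume "e > 0"
  then obtain k where "finite k" "closure S \<subseteq> (\<Union>x\<in>k. ball x e)"
    using assms unfolding compact_eq_totally_bounded by blast
  then show "\<exists>k. finite k \<and> S \<subseteq> (\<Union>x\<in>k. ball x e)"
    using closure_subset by blast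
qed

lemma tbd_image2:
  fixes A :: "'a::metric_space set" and B :: "'b::metric_space set"
    and f :: "'a \<Rightarrow> 'b \<Rightarrow> 'c::metric_space"
  assumes A: "tbd A" and B: "tbd B" and K: "K \<ge> 0"
    and L: "\<And>u u' v v'. u \<in> A \<Longrightarrow> u' \<in> A \<Longrightarrow> v \<in> B \<Longrightarrow> v' \<in> B \<Longrightarrow>
       dist (f u v) (f u' v') \<le> K * (dist u u' + dist v v')"
  shows "tbd {f u v | u v. u \<in> A \<and> v \<in> B}"
proof (rule tbI)
  fix e :: real assume e: "e > 0"
  define e' where "e' = e / (2*K+1)"
  have e': "e' > 0" using e K unfolding e'_def by simp
  obtain kA where kA: "finite kA" "kA \<subseteq> A" "A \<subseteq> (\<Union>x\<in>kA. ball x e')"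
    using A e' unfolding tbd_def by meson
  obtain kB where kB: "finite kB" "kB \<subseteq> B" "B \<subseteq> (\<Union>x\<in>kB. ball x e')"
    using B e' unfolding tbd_def by meson
  show "\<exists>k. finite k \<and> {f u v | u v. u \<in> A \<and> v \<in> B} \<subseteq> (\<Union>x\<in>k. ball x e)"
  proof (intro exI conjI)
    show "finite ((\<lambda>(u,v). f u v) ` (kA \<times> kB))" using kA(1) kB(1) by simp
    show "{f u v | u v. u \<in> A \<and> v \<in> B} \<subseteq> (\<Union>x\<in>(\<lambda>(u,v). f u v) ` (kA \<times> kB). ball x e)"
    proof
      fix z assume "z \<in> {f u v | u v. u \<in> A \<and> v \<in> B}"
      then obtain u v where z: "z = f u v" "u \<in> A" "v \<in> B" by blast
      obtain x where x: "x \<in> kA" "dist x u < e'" using kA(3) z(2) by auto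
      obtain y where y: "y \<in> kB" "dist y v < e'" using kB(3) z(3) by auto
      have xA: "x \<in> A" using kA(2) x(1) by blast
      have yB: "y \<in> B" using kB(2) y(1) by blast
      have "dist (f x y) z \<le> K * (dist x u + dist y v)"
        unfolding z(1) by (rule L[OF xA z(2) yB z(3)])
      also have "\<dots> \<le> K * (2*e')" using x y K by (intro mult_left_mono) auto
      also have "\<dots> < e" using e K unfolding e'_def by (simp add: field_simps)
      finally have "z \<in> ball (f x y) e" by simp
      moreover have "f x y \<in> (\<lambda>(u,v). f u v) ` (kA \<times> kB)" using x(1) y(1) by force
      ultimately show "z \<in> (\<Union>x\<in>(\<lambda>(u,v). f u v) ` (kA \<times> kB). ball x e)"
        by blast
    qed
  qed
qed

lemma tbd_image1:
  fixes A :: "'a::metric_space set" and f :: "'a \<Rightarrow> 'c::metric_space"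
  assumes A: "tbd A" and K: "K \<ge> 0"
    and L: "\<And>u u'. u \<in> A \<Longrightarrow> u' \<in> A \<Longrightarrow> dist (f u) (f u') \<le> K * dist u u'"
  shows "tbd (f ` A)"
proof -
  have B: "tbd {0::real}" unfolding tbd_def by (intro allI impI exI[of _ "{0}"]) auto
  have "tbd {f u | u v. u \<in> A \<and> v \<in> {0::real}}"
  proof (rule tbd_image2[OF A B K])
    fix u u' v v' assume "u \<in> A" "u' \<in> A" "v \<in> {0::real}" "v' \<in> {0::real}"
    then show "dist (f u) (f u') \<le> K * (dist u u' + dist v v')" using L[of u u'] by simp
  qed
  moreover have "f ` A = {f u | u v. u \<in> A \<and> v \<in> {0::real}}" by auto
  ultimately show ?thesis by simp
qed

lemma tbd_interval: "tbd {t::real. \<bar>t\<bar> \<le> M}"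
proof -
  have "{t::real. \<bar>t\<bar> \<le> M} = cball 0 M" by (auto simp: dist_real_def)
  moreover have "tbd (cball (0::real) M)" by (rule compact_closure_tbd) simp
  ultimately show ?thesis by simp
qed

lemma tbd_zero: "tbd {0::'a::real_normed_vector}"
  unfolding tbd_def by (intro allI impI exI[of _ "{0}"]) auto

lemma fd_span:
  fixes Bs :: "'a::real_normed_vector set"
  assumes "finite Bs"
  shows "closed (span Bs) \<and> (\<forall>M. tbd (span Bs \<inter> cball 0 M))"
  using assms
proof (induction Bs rule: finite_induct)
  case empty
  have "span {} = {0::'a}" by simp
  then show ?case using tbd_zero tbd_subset by (metis Int_lower1 closed_singleton)
next
  case (insert b Bs)
  show ?case
  proof (cases "b \<in> span Bs")
    case True
    then have "span (insert b Bs) = span Bs" by (rule span_redundant)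
    then show ?thesis using insert.IH by simp
  next
    case False
    let ?S = "span Bs"
    have cl: "closed ?S" and tb: "\<And>M. tbd (?S \<inter> cball 0 M)" using insert.IH by auto
    define d where "d = infdist b ?S"
    have d: "d > 0" unfolding d_def
      by (rule infdist_pos_not_in_closed[OF cl _ False]) (use span_zero in blast)
    have key: "\<bar>t\<bar> * d \<le> norm (t *\<^sub>R b + v)" if v: "v \<in> ?S" for t v
    proof (cases "t = 0")
      case True then show ?thesis by simp
    next
      case False
      have "(- (1/t)) *\<^sub>R v \<in> ?S" using v by (rule span_mul)
      then have "d \<le> dist b ((- (1/t)) *\<^sub>R v)" unfolding d_def by (rule infdist_le)
      also have "dist b ((- (1/t)) *\<^sub>R v) = norm ((1/t) *\<^sub>R (t *\<^sub>R b + v))"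
        using False by (simp add: dist_norm scaleR_add_right)
      also have "\<dots> = norm (t *\<^sub>R b + v) / \<bar>t\<bar>" by simp
      finally show ?thesis using False by (simp add: field_simps)
    qed
    have span_ins: "span (insert b Bs) = {t *\<^sub>R b + v | t v. v \<in> ?S}"
    proof
      show "span (insert b Bs) \<subseteq> {t *\<^sub>R b + v | t v. v \<in> ?S}"
      proof
        fix x assume "x \<in> span (insert b Bs)"
        then obtain k where "x - k *\<^sub>R b \<in> ?S" unfolding span_insert by blast
        then show "x \<in> {t *\<^sub>R b + v | t v. v \<in> ?S}"
          by (intro CollectI exI[of _ k] exI[of _ "x - k *\<^sub>R b"]) simp
      qed
      show "{t *\<^sub>R b + v | t v. v \<in> ?S} \<subseteq> span (insert b Bs)"
      proof
        fix x assume "x \<in> {t *\<^sub>R b + v | t v. v \<in> ?S}"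
        then obtain t v where "x = t *\<^sub>R b + v" "v \<in> ?S" by blast
        then show "x \<in> span (insert b Bs)" unfolding span_insert by (intro CollectI exI[of _ t]) simp
      qed
    qed
    show ?thesis
    proof
      show "closed (span (insert b Bs))"
        unfolding closed_sequential_limits
      proof (intro allI impI, elim conjE)
        fix s l assume s: "\<forall>n. s n \<in> span (insert b Bs)" and sl: "s \<longlonglongrightarrow> l"
        have "\<forall>n. \<exists>t v. v \<in> ?S \<and> s n = t *\<^sub>R b + v" using s unfolding span_ins by blast
        then obtain t v where tv: "\<And>n. v n \<in> ?S" "\<And>n. s n = t n *\<^sub>R b + v n" by metis
        have "Cauchy s" using sl by (rule LIMSEQ_imp_Cauchy)
        have "Cauchy t"
        proof (rule CauchyI)
          fix e :: real assume e: "e > 0"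
          then obtain M where M: "\<forall>m\<ge>M. \<forall>n\<ge>M. norm (s m - s n) < e * d"
            using CauchyD[OF \<open>Cauchy s\<close>, of "e*d"] d by auto
          show "\<exists>M. \<forall>m\<ge>M. \<forall>n\<ge>M. norm (t m - t n) < e"
          proof (intro exI allI impI)
            fix m n assume mn: "m \<ge> M" "n \<ge> M"
            have "s m - s n = (t m - t n) *\<^sub>R b + (v m - v n)"
              using tv(2)[of m] tv(2)[of n] by (simp add: algebra_simps)
            moreover have "v m - v n \<in> ?S" using tv(1) by (simp add: span_diff)
            ultimately have "\<bar>t m - t n\<bar> * d \<le> norm (s m - s n)" using key by simp
            also have "\<dots> < e * d" using M mn by auto
            finally show "norm (t m - t n) < e" using d by simp
          qed
        qed
        then obtain \<tau> where tau: "t \<longlonglongrightarrow> \<tau>" using Cauchy_convergent_iff convergent_def by blast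
        have lim: "(\<lambda>n. s n - t n *\<^sub>R b) \<longlonglongrightarrow> l - \<tau> *\<^sub>R b"
          by (intro tendsto_intros sl tau)
        have inS: "\<And>n. s n - t n *\<^sub>R b \<in> ?S" using tv by simp
        have "l - \<tau> *\<^sub>R b \<in> ?S" by (rule closed_sequentially[OF cl inS lim])
        then show "l \<in> span (insert b Bs)" unfolding span_ins
          by (intro CollectI exI[of _ \<tau>] exI[of _ "l - \<tau> *\<^sub>R b"]) simp
      qed
      show "\<forall>M. tbd (span (insert b Bs) \<inter> cball 0 M)"
      proof
        fix M :: real
        define M1 where "M1 = \<bar>M\<bar> / d"
        define M2 where "M2 = \<bar>M\<bar> + M1 * norm b"
        have "tbd {t *\<^sub>R b + v | t v. t \<in> {t. \<bar>t\<bar> \<le> M1} \<and> v \<in> ?S \<inter> cball 0 M2}"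
        proof (rule tbd_image2[OF tbd_interval tb, of "norm b + 1"])
          show "0 \<le> norm b + 1" by simp
          fix u u' v v'
          have "dist (u *\<^sub>R b + v) (u' *\<^sub>R b + v') = norm ((u - u') *\<^sub>R b + (v - v'))"
            by (simp add: dist_norm algebra_simps)
          also have "\<dots> \<le> \<bar>u - u'\<bar> * norm b + norm (v - v')"
            by (metis norm_scaleR norm_triangle_ineq real_norm_def)
          also have "\<dots> \<le> (norm b + 1) * (dist u u' + dist v v')"
            by (simp add: dist_norm dist_real_def algebra_simps)
          finally show "dist (u *\<^sub>R b + v) (u' *\<^sub>R b + v') \<le> (norm b + 1) * (dist u u' + dist v v')" .
        qed
        moreover have "span (insert b Bs) \<inter> cball 0 M \<subseteq>
            {t *\<^sub>R b + v | t v. t \<in> {t. \<bar>t\<bar> \<le> M1} \<and> v \<in> ?S \<inter> cball 0 M2}"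
        proof
          fix x assume x: "x \<in> span (insert b Bs) \<inter> cball 0 M"
          then obtain t v where tv: "x = t *\<^sub>R b + v" "v \<in> ?S" unfolding span_ins by blast
          have nx: "norm x \<le> \<bar>M\<bar>" using x by auto
          have "\<bar>t\<bar> * d \<le> \<bar>M\<bar>" using key[OF tv(2), of t] tv(1) nx by simp
          then have t: "\<bar>t\<bar> \<le> M1" unfolding M1_def using d by (simp add: field_simps)
          have "norm v = norm (x - t *\<^sub>R b)" using tv by simp
          also have "\<dots> \<le> norm x + \<bar>t\<bar> * norm b" by (metis norm_scaleR norm_triangle_ineq4)
          also have "\<dots> \<le> M2" unfolding M2_def using nx t by (intro add_mono mult_right_mono) auto
          finally show "x \<in> {t *\<^sub>R b + v | t v. t \<in> {t. \<bar>t\<bar> \<le> M1} \<and> v \<in> ?S \<inter> cball 0 M2}"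
            using tv t by auto
        qed
        ultimately show "tbd (span (insert b Bs) \<inter> cball 0 M)" by (rule tbd_subset)
      qed
    qed
  qed
qed

lemma lin_zero:
  assumes "linear_on V T" "0 \<in> V" shows "T 0 = 0"
proof -
  have "T (0 *\<^sub>R 0) = 0 *\<^sub>R T 0" using assms unfolding linear_on_def by blast
  then show ?thesis by simp
qed

lemma bop_boundE:
  assumes "bounded_op V T" obtains K where "K \<ge> 0" "\<And>x. x \<in> V \<Longrightarrow> norm (T x) \<le> K * norm x"
proof -
  obtain K where K: "\<forall>x\<in>V. norm (T x) \<le> K * norm x" using assms unfolding bounded_op_def by blast
  have "\<forall>x\<in>V. norm (T x) \<le> max K 0 * norm x"
    using K by (metis max.cobounded1 mult_right_mono norm_ge_zero order_trans)
  then show ?thesis using that[of "max K 0"] by auto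
qed

lemma opnorm_upper:
  assumes K: "\<forall>x\<in>V. norm (T x) \<le> K * norm x" and x: "x \<in> V" "norm x \<le> 1"
  shows "norm (T x) \<le> opnorm V T"
  unfolding opnorm_def
proof (rule cSup_upper)
  show "norm (T x) \<in> (\<lambda>x. norm (T x)) ` {x \<in> V. norm x \<le> 1}" using x by auto
  show "bdd_above ((\<lambda>x. norm (T x)) ` {x \<in> V. norm x \<le> 1})"
  proof (rule bdd_aboveI2)
    fix y assume y: "y \<in> {x \<in> V. norm x \<le> 1}"
    have "norm (T y) \<le> K * norm y" using K y by auto
    also have "\<dots> \<le> \<bar>K\<bar> * norm y" by (simp add: mult_right_mono)
    also have "\<dots> \<le> \<bar>K\<bar>" using y by (simp add: mult_left_le)
    finally show "norm (T y) \<le> \<bar>K\<bar>" .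
  qed
qed

lemma opnorm_le:
  assumes "0 \<in> V" and "\<And>x. x \<in> V \<Longrightarrow> norm x \<le> 1 \<Longrightarrow> norm (T x) \<le> M"
  shows "opnorm V T \<le> M"
  unfolding opnorm_def
  by (rule cSup_least) (use assms in auto)

lemma opnorm_nonneg:
  assumes K: "\<forall>x\<in>V. norm (T x) \<le> K * norm x" and "0 \<in> V"
  shows "0 \<le> opnorm V T"
proof -
  have "norm (T 0) \<le> opnorm V T" using opnorm_upper[OF K \<open>0 \<in> V\<close>] by simp
  then show ?thesis using norm_ge_zero order_trans by blast
qed

lemma opnorm_bound:
  assumes V: "subspace V" and L: "linear_on V T" and K: "\<forall>x\<in>V. norm (T x) \<le> K * norm x"
    and x: "x \<in> V"
  shows "norm (T x) \<le> opnorm V T * norm x"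
proof (cases "x = 0")
  case True
  then show ?thesis using lin_zero[OF L] V by (simp add: subspace_0)
next
  case False
  define u where "u = (1 / norm x) *\<^sub>R x"
  have u: "u \<in> V" "norm u \<le> 1" using x V False unfolding u_def by (auto simp: subspace_scale)
  have "T u = (1 / norm x) *\<^sub>R T x" using L x unfolding u_def linear_on_def by blast
  then have "norm (T x) / norm x \<le> opnorm V T" using opnorm_upper[OF K u] by simp
  then show ?thesis using False by (simp add: field_simps)
qed

lemma bop_diff:
  assumes V: "subspace V" and S: "bounded_op V S" and T: "bounded_op V T"
  shows "bounded_op V (\<lambda>x. S x - T x)"
proof -
  obtain K1 where K1: "\<And>x. x \<in> V \<Longrightarrow> norm (S x) \<le> K1 * norm x" using bop_boundE[OF S] by blast
  obtain K2 where K2: "\<And>x. x \<in> V \<Longrightarrow> norm (T x) \<le> K2 * norm x" using bop_boundE[OF T] by blast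
  have "\<forall>x\<in>V. norm (S x - T x) \<le> (K1 + K2) * norm x"
    using K1 K2 by (metis distrib_right norm_triangle_le_diff add_mono)
  moreover have "linear_on V (\<lambda>x. S x - T x)" using S T unfolding bounded_op_def linear_on_def
    by (simp add: algebra_simps)
  moreover have "(\<lambda>x. S x - T x) ` V \<subseteq> V" using S T V unfolding bounded_op_def
    by (auto intro!: subspace_diff)
  ultimately show ?thesis unfolding bounded_op_def by blast
qed

lemma bop_add:
  assumes V: "subspace V" and S: "bounded_op V S" and T: "bounded_op V T"
  shows "bounded_op V (\<lambda>x. S x + T x)"
proof -
  obtain K1 where K1: "\<And>x. x \<in> V \<Longrightarrow> norm (S x) \<le> K1 * norm x" using bop_boundE[OF S] by blast
  obtain K2 where K2: "\<And>x. x \<in> V \<Longrightarrow> norm (T x) \<le> K2 * norm x" using bop_boundE[OF T] by blast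
  have "\<forall>x\<in>V. norm (S x + T x) \<le> (K1 + K2) * norm x"
    using K1 K2 by (metis distrib_right norm_triangle_le add_mono)
  moreover have "linear_on V (\<lambda>x. S x + T x)" using S T unfolding bounded_op_def linear_on_def
    by (simp add: algebra_simps)
  moreover have "(\<lambda>x. S x + T x) ` V \<subseteq> V" using S T V unfolding bounded_op_def
    by (auto intro!: subspace_add)
  ultimately show ?thesis unfolding bounded_op_def by blast
qed

lemma bop_scale:
  assumes V: "subspace V" and T: "bounded_op V T"
  shows "bounded_op V (\<lambda>x. c *\<^sub>R T x)"
proof -
  obtain K where K: "\<And>x. x \<in> V \<Longrightarrow> norm (T x) \<le> K * norm x" using bop_boundE[OF T] by blast
  have "\<forall>x\<in>V. norm (c *\<^sub>R T x) \<le> (\<bar>c\<bar> * K) * norm x"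
    using K by (simp add: mult.assoc mult_left_mono)
  moreover have "linear_on V (\<lambda>x. c *\<^sub>R T x)" using T unfolding bounded_op_def linear_on_def
    by (simp add: algebra_simps)
  moreover have "(\<lambda>x. c *\<^sub>R T x) ` V \<subseteq> V" using T V unfolding bounded_op_def
    by (auto intro!: subspace_scale)
  ultimately show ?thesis unfolding bounded_op_def by blast
qed

lemma bop_zero: "subspace V \<Longrightarrow> bounded_op V (\<lambda>x. 0)"
  unfolding bounded_op_def linear_on_def by (auto simp: subspace_0 intro!: exI[of _ 0])

lemma fr_zero: "subspace V \<Longrightarrow> finite_rank_op V (\<lambda>x. 0)"
  unfolding finite_rank_op_def using bop_zero by (auto intro!: exI[of _ "{}"])

lemma fr_add:
  assumes V: "subspace V" and F: "finite_rank_op V F" and G: "finite_rank_op V G"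
  shows "finite_rank_op V (\<lambda>x. F x + G x)"
proof -
  obtain B1 where B1: "finite B1" "F ` V \<subseteq> span B1" using F unfolding finite_rank_op_def by blast
  obtain B2 where B2: "finite B2" "G ` V \<subseteq> span B2" using G unfolding finite_rank_op_def by blast
  have "(\<lambda>x. F x + G x) ` V \<subseteq> span (B1 \<union> B2)"
  proof
    fix y assume "y \<in> (\<lambda>x. F x + G x) ` V"
    then obtain x where "x \<in> V" "y = F x + G x" by blast
    moreover have "F x \<in> span (B1 \<union> B2)" using B1 \<open>x \<in> V\<close> span_mono[of B1 "B1 \<union> B2"] by blast
    moreover have "G x \<in> span (B1 \<union> B2)" using B2 \<open>x \<in> V\<close> span_mono[of B2 "B1 \<union> B2"] by blast
    ultimately show "y \<in> span (B1 \<union> B2)" by (simp add: span_add)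
  qed
  then show ?thesis using B1 B2 bop_add[OF V] F G unfolding finite_rank_op_def
    by (metis finite_UnI)
qed

lemma fr_scale:
  assumes V: "subspace V" and F: "finite_rank_op V F"
  shows "finite_rank_op V (\<lambda>x. c *\<^sub>R F x)"
proof -
  obtain B1 where B1: "finite B1" "F ` V \<subseteq> span B1" using F unfolding finite_rank_op_def by blast
  have "(\<lambda>x. c *\<^sub>R F x) ` V \<subseteq> span B1" using B1 by (auto intro: span_mul)
  then show ?thesis using B1 bop_scale[OF V] F unfolding finite_rank_op_def by metis
qed

lemma approx_zero:
  assumes V: "subspace V" shows "approximable_op V (\<lambda>x. 0)"
  unfolding approximable_op_def
proof (intro conjI allI impI)
  show "bounded_op V (\<lambda>x. 0)" using bop_zero[OF V] .
  fix e :: real assume "e > 0"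
  have "opnorm V (\<lambda>x. (0::'a) - 0) \<le> 0" by (rule opnorm_le) (use V subspace_0 in auto)
  then show "\<exists>F. finite_rank_op V F \<and> opnorm V (\<lambda>x. 0 - F x) < e"
    using fr_zero[OF V] \<open>e > 0\<close> by (intro exI[of _ "\<lambda>x. 0"]) auto
qed

lemma fr_tbd:
  assumes V: "subspace V" and F: "finite_rank_op V F"
  shows "tbd (F ` {x\<in>V. norm x \<le> 1})"
proof -
  obtain B where B: "finite B" "F ` V \<subseteq> span B" using F unfolding finite_rank_op_def by blast
  obtain K where K: "\<And>x. x \<in> V \<Longrightarrow> norm (F x) \<le> K * norm x" "K \<ge> 0"
    using F bop_boundE unfolding finite_rank_op_def by metis
  have "F ` {x\<in>V. norm x \<le> 1} \<subseteq> span B \<inter> cball 0 K"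
  proof
    fix y assume "y \<in> F ` {x\<in>V. norm x \<le> 1}"
    then obtain x where x: "x \<in> V" "norm x \<le> 1" "y = F x" by blast
    have "norm (F x) \<le> K * norm x" using K x by auto
    also have "\<dots> \<le> K" using x K by (simp add: mult_left_le)
    finally show "y \<in> span B \<inter> cball 0 K" using B x by auto
  qed
  then show ?thesis using fd_span[OF B(1)] tbd_subset by blast
qed

lemma normalize:
  fixes V :: "'b::real_normed_vector set"
  assumes V: "subspace V" and nt: "KA_nontrivial V"
  shows "\<exists>S. linear_on V S \<and> S ` V \<subseteq> V \<and> (\<forall>y\<in>V. norm (S y) \<le> 2 * norm y) \<and>
     tbd (S ` {y\<in>V. norm y \<le> 1}) \<and> (\<forall>G. finite_rank_op V G \<longrightarrow> 1 \<le> opnorm V (\<lambda>y. S y - G y))"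
proof -
  have V0: "0 \<in> V" using V by (rule subspace_0)
  obtain T where cT: "compact_op V T" and nap: "\<not> approximable_op V T"
    using nt unfolding KA_nontrivial_def by blast
  have bT: "bounded_op V T" using cT unfolding compact_op_def by blast
  have "\<not> (\<forall>e>0. \<exists>F. finite_rank_op V F \<and> opnorm V (\<lambda>x. T x - F x) < e)"
    using nap bT unfolding approximable_op_def by blast
  then obtain e where e: "e > 0" and eF0: "\<forall>F. finite_rank_op V F \<longrightarrow> \<not> opnorm V (\<lambda>x. T x - F x) < e"
    by blast
  have eF: "\<And>F. finite_rank_op V F \<Longrightarrow> e \<le> opnorm V (\<lambda>x. T x - F x)" using eF0 not_less by blast
  define D where "D = {opnorm V (\<lambda>x. T x - F x) | F. finite_rank_op V F}"
  define d where "d = Inf D"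
  have Dne: "D \<noteq> {}" unfolding D_def using fr_zero[OF V] by blast
  have Dnn: "0 \<le> opnorm V (\<lambda>x. T x - F x)" if "finite_rank_op V F" for F
  proof -
    have bb: "bounded_op V (\<lambda>x. T x - F x)" using bop_diff[OF V bT] that unfolding finite_rank_op_def by blast
    obtain K where "\<And>x. x \<in> V \<Longrightarrow> norm (T x - F x) \<le> K * norm x" using bop_boundE[OF bb] by blast
    then have "\<forall>x\<in>V. norm (T x - F x) \<le> K * norm x" by blast
    then show ?thesis by (rule opnorm_nonneg[OF _ V0])
  qed
  have Dmem: "\<exists>F. finite_rank_op V F \<and> x = opnorm V (\<lambda>x. T x - F x)" if "x \<in> D" for x
    using that unfolding D_def by blast
  have Dbdd: "bdd_below D"
  proof (rule bdd_belowI[of _ 0])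
    fix x assume "x \<in> D" then show "0 \<le> x" using Dmem Dnn by metis
  qed
  have de: "e \<le> d" unfolding d_def
  proof (rule cInf_greatest[OF Dne])
    fix x assume "x \<in> D" then show "e \<le> x" using Dmem eF by metis
  qed
  then have d: "d > 0" using e by simp
  have "Inf D < 2 * d" using d unfolding d_def by simp
  then obtain z where "z \<in> D" "z < 2 * d" using cInf_lessD[OF Dne] by blast
  then obtain F0 where F0: "finite_rank_op V F0" "opnorm V (\<lambda>x. T x - F0 x) < 2 * d"
    unfolding D_def by blast
  have bTF: "bounded_op V (\<lambda>x. T x - F0 x)" using bop_diff[OF V bT] F0 unfolding finite_rank_op_def by blast
  define S where "S = (\<lambda>y. (1/d) *\<^sub>R (T y - F0 y))"
  have bS: "bounded_op V S" unfolding S_def by (rule bop_scale[OF V bTF])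
  have linS: "linear_on V S" and mapS: "S ` V \<subseteq> V" using bS unfolding bounded_op_def by auto
  have normS: "\<forall>y\<in>V. norm (S y) \<le> 2 * norm y"
  proof
    fix y assume y: "y \<in> V"
    obtain K where "\<And>x. x \<in> V \<Longrightarrow> norm (T x - F0 x) \<le> K * norm x" using bop_boundE[OF bTF] by blast
    then have "norm (T y - F0 y) \<le> opnorm V (\<lambda>x. T x - F0 x) * norm y"
      using opnorm_bound[OF V] bTF y unfolding bounded_op_def by blast
    also have "\<dots> \<le> 2 * d * norm y" using F0(2) by (simp add: mult_right_mono)
    finally have "norm (T y - F0 y) \<le> 2 * d * norm y" .
    then have "(1/d) * norm (T y - F0 y) \<le> (1/d) * (2 * d * norm y)"
      using d by (intro mult_left_mono) auto
    also have "\<dots> = 2 * norm y" using d by simp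
    finally show "norm (S y) \<le> 2 * norm y" unfolding S_def norm_scaleR using d by simp
  qed
  have tbS: "tbd (S ` {y\<in>V. norm y \<le> 1})"
  proof -
    have t1: "tbd (T ` {y\<in>V. norm y \<le> 1})" using cT compact_closure_tbd unfolding compact_op_def by blast
    have t2: "tbd (F0 ` {y\<in>V. norm y \<le> 1})" by (rule fr_tbd[OF V F0(1)])
    have "tbd {(1/d) *\<^sub>R (u - v) | u v. u \<in> T ` {y\<in>V. norm y \<le> 1} \<and> v \<in> F0 ` {y\<in>V. norm y \<le> 1}}"
    proof (rule tbd_image2[OF t1 t2, of "1/d"])
      show "0 \<le> 1/d" using d by simp
      fix u u' v v' :: 'b
      have eq: "(1/d) *\<^sub>R (u - v) - (1/d) *\<^sub>R (u' - v') = (1/d) *\<^sub>R ((u - u') - (v - v'))"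
        by (simp add: algebra_simps)
      have "dist ((1/d) *\<^sub>R (u - v)) ((1/d) *\<^sub>R (u' - v')) = (1/d) * norm ((u - u') - (v - v'))"
        unfolding dist_norm eq using d by simp
      also have "\<dots> \<le> (1/d) * (dist u u' + dist v v')"
        using d by (intro mult_left_mono) (auto simp: dist_norm norm_triangle_ineq4)
      finally show "dist ((1/d) *\<^sub>R (u - v)) ((1/d) *\<^sub>R (u' - v')) \<le> (1/d) * (dist u u' + dist v v')" .
    qed
    moreover have "S ` {y\<in>V. norm y \<le> 1} \<subseteq> {(1/d) *\<^sub>R (u - v) | u v. u \<in> T ` {y\<in>V. norm y \<le> 1} \<and> v \<in> F0 ` {y\<in>V. norm y \<le> 1}}"
    proof
      fix z assume "z \<in> S ` {y\<in>V. norm y \<le> 1}"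
      then obtain y where y: "y \<in> {y\<in>V. norm y \<le> 1}" "z = S y" by blast
      show "z \<in> {(1/d) *\<^sub>R (u - v) | u v. u \<in> T ` {y\<in>V. norm y \<le> 1} \<and> v \<in> F0 ` {y\<in>V. norm y \<le> 1}}"
        unfolding S_def y(2) by (rule CollectI, rule exI[of _ "T y"], rule exI[of _ "F0 y"]) (use y(1) in auto)
    qed
    ultimately show ?thesis by (rule tbd_subset)
  qed
  have lowS: "1 \<le> opnorm V (\<lambda>y. S y - G y)" if G: "finite_rank_op V G" for G
  proof -
    define H where "H = (\<lambda>y. F0 y + d *\<^sub>R G y)"
    have H: "finite_rank_op V H" unfolding H_def by (rule fr_add[OF V F0(1) fr_scale[OF V G]])
    have "opnorm V (\<lambda>x. T x - H x) \<in> D" unfolding D_def using H by blast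
    then have "d \<le> opnorm V (\<lambda>x. T x - H x)" unfolding d_def
      by (rule cInf_lower[OF _ Dbdd])
    also have "opnorm V (\<lambda>x. T x - H x) \<le> d * opnorm V (\<lambda>y. S y - G y)"
    proof (rule opnorm_le[OF V0])
      fix y assume y: "y \<in> V" "norm y \<le> 1"
      have bSG: "bounded_op V (\<lambda>y. S y - G y)" using bop_diff[OF V bS] G unfolding finite_rank_op_def by blast
      obtain K where K: "\<And>x. x \<in> V \<Longrightarrow> norm (S x - G x) \<le> K * norm x" using bop_boundE[OF bSG] by blast
      have "T y - H y = d *\<^sub>R (S y - G y)" unfolding H_def S_def using d by (simp add: algebra_simps)
      then have "norm (T y - H y) = d * norm (S y - G y)" using d by simp
      also have "\<dots> \<le> d * opnorm V (\<lambda>y. S y - G y)"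
        using opnorm_upper[of V "\<lambda>y. S y - G y" K y] K y d by (intro mult_left_mono) auto
      finally show "norm (T y - H y) \<le> d * opnorm V (\<lambda>y. S y - G y)" .
    qed
    finally show ?thesis using d by simp
  qed
  have low': "\<forall>G. finite_rank_op V G \<longrightarrow> 1 \<le> opnorm V (\<lambda>y. S y - G y)" using lowS by blast
  show ?thesis using linS mapS normS tbS low' by blast
qed

lemma p_cases:
  assumes "1 \<le> (p::ereal)"
  obtains "p = \<infinity>" | q where "p = ereal q" "q \<ge> 1" "real_of_ereal p = q"
  using assms by (cases p) auto

lemma conv_bdd: "(\<lambda>n. norm (g n)) \<longlonglongrightarrow> (0::real) \<Longrightarrow> bdd_above (range (\<lambda>n. norm (g n)))"
  by (intro Bseq_bdd_above convergent_imp_Bseq convergentI)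

lemma lp_mono:
  assumes p: "1 \<le> p" and g: "g \<in> lp_sum p Vs" and f: "\<forall>n. f n \<in> Vs n" and k: "k \<ge> 0"
    and le: "\<And>n. norm (f n) \<le> k * norm (g n)"
  shows "f \<in> lp_sum p Vs \<and> lp_sum_norm p f \<le> k * lp_sum_norm p g"
  using p
proof (cases rule: p_cases)
  case 1
  have g0: "(\<lambda>n. norm (g n)) \<longlonglongrightarrow> 0" using g 1 unfolding lp_sum_def by auto
  have "(\<lambda>n. k * norm (g n)) \<longlonglongrightarrow> 0" using tendsto_mult_right_zero[OF g0] by simp
  then have f0: "(\<lambda>n. norm (f n)) \<longlonglongrightarrow> 0"
    by (rule Lim_null_comparison[rotated]) (use le in auto)
  have bg: "bdd_above (range (\<lambda>n. norm (g n)))" by (rule conv_bdd[OF g0])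
  have "Sup (range (\<lambda>n. norm (f n))) \<le> k * Sup (range (\<lambda>n. norm (g n)))"
  proof (rule cSup_least)
    show "range (\<lambda>n. norm (f n)) \<noteq> {}" by simp
    fix x assume "x \<in> range (\<lambda>n. norm (f n))"
    then obtain n where xn: "x = norm (f n)" by blast
    have gs: "norm (g n) \<le> Sup (range (\<lambda>n. norm (g n)))" by (rule cSup_upper[OF _ bg]) simp
    have "k * norm (g n) \<le> k * Sup (range (\<lambda>n. norm (g n)))" using gs k by (rule mult_left_mono)
    then show "x \<le> k * Sup (range (\<lambda>n. norm (g n)))" using le[of n] xn by linarith
  qed
  then show ?thesis using f f0 1 unfolding lp_sum_def lp_sum_norm_def by simp
next
  case (2 q)
  have sg: "summable (\<lambda>n. norm (g n) powr q)" using g 2 unfolding lp_sum_def by auto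
  have le2: "norm (f n) powr q \<le> k powr q * norm (g n) powr q" for n
  proof -
    have "norm (f n) powr q \<le> (k * norm (g n)) powr q" using le[of n] 2 by (intro powr_mono2) auto
    also have "\<dots> = k powr q * norm (g n) powr q" by (rule powr_mult)
    finally show ?thesis .
  qed
  have sk: "summable (\<lambda>n. k powr q * norm (g n) powr q)" by (rule summable_mult[OF sg])
  have sf: "summable (\<lambda>n. norm (f n) powr q)"
    by (rule summable_comparison_test[OF _ sk]) (use le2 in auto)
  have "(\<Sum>n. norm (f n) powr q) \<le> (\<Sum>n. k powr q * norm (g n) powr q)"
    by (rule suminf_le[OF le2 sf sk])
  also have "\<dots> = k powr q * (\<Sum>n. norm (g n) powr q)" by (rule suminf_mult[OF sg])
  finally have "(\<Sum>n. norm (f n) powr q) powr (1/q) \<le> (k powr q * (\<Sum>n. norm (g n) powr q)) powr (1/q)"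
    using 2 by (intro powr_mono2) (auto intro!: suminf_nonneg sf)
  also have "\<dots> = (k powr q) powr (1/q) * (\<Sum>n. norm (g n) powr q) powr (1/q)" by (rule powr_mult)
  also have "(k powr q) powr (1/q) = k" using 2 k by (simp add: powr_powr powr_one)
  finally show ?thesis using f sf 2 unfolding lp_sum_def lp_sum_norm_def by simp
qed

lemma lp_coord:
  assumes p: "1 \<le> p" and f: "f \<in> lp_sum p Vs"
  shows "norm (f n) \<le> lp_sum_norm p f"
  using p
proof (cases rule: p_cases)
  case 1
  have f0: "(\<lambda>n. norm (f n)) \<longlonglongrightarrow> 0" using f 1 unfolding lp_sum_def by auto
  show ?thesis unfolding lp_sum_norm_def using 1 by (simp add: cSup_upper[OF _ conv_bdd[OF f0]])
next
  case (2 q)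
  have sf: "summable (\<lambda>n. norm (f n) powr q)" using f 2 unfolding lp_sum_def by auto
  have "norm (f n) powr q \<le> (\<Sum>n. norm (f n) powr q)"
    using sum_le_suminf[OF sf, of "{n}"] by simp
  then have "(norm (f n) powr q) powr (1/q) \<le> (\<Sum>n. norm (f n) powr q) powr (1/q)"
    using 2 by (intro powr_mono2) auto
  moreover have "(norm (f n) powr q) powr (1/q) = norm (f n)" using 2 by (simp add: powr_powr powr_one)
  ultimately show ?thesis unfolding lp_sum_norm_def using 2 by simp
qed

lemma lp_delta:
  assumes p: "1 \<le> p" and V0: "\<forall>m. 0 \<in> Vs m" and y: "y \<in> Vs n"
  shows "(\<lambda>m. if m = n then y else 0) \<in> lp_sum p Vs \<and> lp_sum_norm p (\<lambda>m. if m = n then y else 0) = norm y"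
  using p
proof (cases rule: p_cases)
  case 1
  have ev: "eventually (\<lambda>m. norm (if m = n then y else 0) = 0) sequentially"
    unfolding eventually_sequentially by (intro exI[of _ "Suc n"]) auto
  have t: "(\<lambda>m. norm (if m = n then y else 0)) \<longlonglongrightarrow> 0" by (rule tendsto_eventually[OF ev])
  have "Sup (range (\<lambda>m. norm (if m = n then y else 0))) = norm y"
  proof (rule antisym)
    show "Sup (range (\<lambda>m. norm (if m = n then y else 0))) \<le> norm y" by (rule cSup_least) auto
    have "norm (if n = n then y else 0) \<le> Sup (range (\<lambda>m. norm (if m = n then y else 0)))"
      by (rule cSup_upper[OF rangeI conv_bdd[OF t]])
    then show "norm y \<le> Sup (range (\<lambda>m. norm (if m = n then y else 0)))" by simp
  qed
  then show ?thesis using t V0 y 1 unfolding lp_sum_def lp_sum_norm_def by auto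
next
  case (2 q)
  have eq: "(\<lambda>m. norm (if m = n then y else 0) powr q) = (\<lambda>m. if m = n then norm y powr q else 0)"
    by auto
  have s: "(\<lambda>m. norm (if m = n then y else 0) powr q) sums (norm y powr q)"
    unfolding eq using sums_single[of n "\<lambda>_. norm y powr q"] by simp
  have "(norm y powr q) powr (1/q) = norm y" using 2 by (simp add: powr_powr powr_one)
  then show ?thesis using s V0 y 2 unfolding lp_sum_def lp_sum_norm_def
    by (auto simp: sums_iff)
qed

locale lpiso =
  fixes p :: ereal and Vs :: "nat \<Rightarrow> 'b::real_normed_vector set" and U :: "'a::banach \<Rightarrow> nat \<Rightarrow> 'b"
    and c C :: real
  assumes p: "1 \<le> p" and sub: "\<And>n. subspace (Vs n)" and bij: "lin_bij_to_lp_sum p Vs U"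
    and c: "0 < c" and nrm: "\<And>x. c * norm x \<le> lp_sum_norm p (U x) \<and> lp_sum_norm p (U x) \<le> C * norm x"
begin

definition W where "W = inv_into UNIV U"

lemma V0: "\<forall>m. 0 \<in> Vs m" using sub subspace_0 by blast

lemma U_in: "U x \<in> lp_sum p Vs" using bij unfolding lin_bij_to_lp_sum_def bij_betw_def by blast

lemma U_inj: "inj U" using bij unfolding lin_bij_to_lp_sum_def bij_betw_def by blast

lemma UW: "f \<in> lp_sum p Vs \<Longrightarrow> U (W f) = f"
  using bij unfolding lin_bij_to_lp_sum_def bij_betw_def W_def by (simp add: f_inv_into_f)

lemma WU: "W (U x) = x" using U_inj unfolding W_def by simp

lemma U_add: "U (x + y) = (\<lambda>n. U x n + U y n)"
  using bij unfolding lin_bij_to_lp_sum_def by simp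

lemma U_scale: "U (a *\<^sub>R x) = (\<lambda>n. a *\<^sub>R U x n)"
  using bij unfolding lin_bij_to_lp_sum_def by simp

lemma U_diff: "U (x - y) = (\<lambda>n. U x n - U y n)"
proof -
  have "U (x - y) = U (x + (-1) *\<^sub>R y)" by simp
  also have "\<dots> = (\<lambda>n. U x n - U y n)" unfolding U_add U_scale by simp
  finally show ?thesis .
qed

lemma W_add:
  assumes "f \<in> lp_sum p Vs" "g \<in> lp_sum p Vs" shows "W (\<lambda>n. f n + g n) = W f + W g"
proof -
  have "U (W f + W g) = (\<lambda>n. f n + g n)" unfolding U_add UW[OF assms(1)] UW[OF assms(2)] ..
  then have "W (U (W f + W g)) = W (\<lambda>n. f n + g n)" by simp
  then show ?thesis unfolding WU by simp
qed

lemma W_scale: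
  assumes "f \<in> lp_sum p Vs" shows "W (\<lambda>n. a *\<^sub>R f n) = a *\<^sub>R W f"
proof -
  have "U (a *\<^sub>R W f) = (\<lambda>n. a *\<^sub>R f n)" unfolding U_scale UW[OF assms(1)] ..
  then have "W (U (a *\<^sub>R W f)) = W (\<lambda>n. a *\<^sub>R f n)" by simp
  then show ?thesis unfolding WU by simp
qed

lemma W_norm: "f \<in> lp_sum p Vs \<Longrightarrow> c * norm (W f) \<le> lp_sum_norm p f"
  using nrm[of "W f"] UW by simp

lemma U_coord: "norm (U x n) \<le> \<bar>C\<bar> * norm x"
proof -
  have "norm (U x n) \<le> lp_sum_norm p (U x)" by (rule lp_coord[OF p U_in])
  also have "\<dots> \<le> C * norm x" using nrm by blast
  also have "\<dots> \<le> \<bar>C\<bar> * norm x" by (simp add: mult_right_mono)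
  finally show ?thesis .
qed

lemma U_coord_in: "U x n \<in> Vs n" using U_in unfolding lp_sum_def by blast

lemma Uc_linear: "linear (\<lambda>z. U z n)"
  by (rule linearI) (simp_all add: U_add U_scale)

end

lemma c0_bound:
  assumes "a \<in> c0" shows "\<bar>a n\<bar> \<le> sup_norm a"
proof -
  have "a \<longlonglongrightarrow> 0" using assms unfolding c0_def by simp
  then have "Bseq a" by (intro convergent_imp_Bseq convergentI)
  then have "bdd_above (range (\<lambda>n. norm (a n)))" by (rule Bseq_bdd_above')
  then have "bdd_above (range (\<lambda>n. \<bar>a n\<bar>))" by simp
  then show ?thesis unfolding sup_norm_def by (rule cSup_upper[OF rangeI])
qed

lemma sup_norm_nonneg: "a \<in> c0 \<Longrightarrow> 0 \<le> sup_norm a"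
  using c0_bound[of a 0] by linarith

locale lpiso2 = lpiso p Vs U c C
  for p :: ereal and Vs :: "nat \<Rightarrow> 'b::real_normed_vector set" and U :: "'a::banach \<Rightarrow> nat \<Rightarrow> 'b"
    and c C :: real +
  assumes nt: "\<And>n. KA_nontrivial (Vs n)"
begin

definition Tn where "Tn n = (SOME S. linear_on (Vs n) S \<and> S ` (Vs n) \<subseteq> Vs n \<and>
     (\<forall>y\<in>Vs n. norm (S y) \<le> 2 * norm y) \<and> tbd (S ` {y\<in>Vs n. norm y \<le> 1}) \<and>
     (\<forall>G. finite_rank_op (Vs n) G \<longrightarrow> 1 \<le> opnorm (Vs n) (\<lambda>y. S y - G y)))"

lemma Tn_props: "linear_on (Vs n) (Tn n) \<and> Tn n ` (Vs n) \<subseteq> Vs n \<and>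
     (\<forall>y\<in>Vs n. norm (Tn n y) \<le> 2 * norm y) \<and> tbd (Tn n ` {y\<in>Vs n. norm y \<le> 1}) \<and>
     (\<forall>G. finite_rank_op (Vs n) G \<longrightarrow> 1 \<le> opnorm (Vs n) (\<lambda>y. Tn n y - G y))"
  unfolding Tn_def by (rule someI_ex[OF normalize[OF sub nt]])

lemma Tn_lin: "linear_on (Vs n) (Tn n)" using Tn_props by blast
lemma Tn_map: "y \<in> Vs n \<Longrightarrow> Tn n y \<in> Vs n" using Tn_props by blast
lemma Tn_norm: "y \<in> Vs n \<Longrightarrow> norm (Tn n y) \<le> 2 * norm y" using Tn_props by blast
lemma Tn_tb: "tbd (Tn n ` {y\<in>Vs n. norm y \<le> 1})" using Tn_props by blast
lemma Tn_low: "finite_rank_op (Vs n) G \<Longrightarrow> 1 \<le> opnorm (Vs n) (\<lambda>y. Tn n y - G y)"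
  using Tn_props by blast

lemma lp_add_in:
  assumes "f \<in> lp_sum p Vs" "g \<in> lp_sum p Vs" shows "(\<lambda>n. f n + g n) \<in> lp_sum p Vs"
proof -
  have "U (W f + W g) = (\<lambda>n. f n + g n)" unfolding U_add UW[OF assms(1)] UW[OF assms(2)] ..
  then show ?thesis using U_in[of "W f + W g"] by simp
qed

lemma lp_scale_in:
  assumes "f \<in> lp_sum p Vs" shows "(\<lambda>n. r *\<^sub>R f n) \<in> lp_sum p Vs"
proof -
  have "U (r *\<^sub>R W f) = (\<lambda>n. r *\<^sub>R f n)" unfolding U_scale UW[OF assms(1)] ..
  then show ?thesis using U_in[of "r *\<^sub>R W f"] by simp
qed

definition seq where "seq a x = (\<lambda>n. a n *\<^sub>R Tn n (U x n))"
definition J where "J a x = W (seq a x)"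

lemma seq_in:
  assumes s: "\<And>n. \<bar>a n\<bar> \<le> s"
  shows "seq a x \<in> lp_sum p Vs \<and> lp_sum_norm p (seq a x) \<le> (2 * s) * lp_sum_norm p (U x)"
proof (rule lp_mono[OF p U_in])
  show "\<forall>n. seq a x n \<in> Vs n" unfolding seq_def using sub Tn_map U_coord_in by (simp add: subspace_scale)
  show "0 \<le> 2 * s" using s[of 0] by simp
  fix n
  have "norm (seq a x n) = \<bar>a n\<bar> * norm (Tn n (U x n))" unfolding seq_def by simp
  also have "\<dots> \<le> s * (2 * norm (U x n))"
    using s[of n] Tn_norm[OF U_coord_in] by (intro mult_mono) auto
  finally show "norm (seq a x n) \<le> 2 * s * norm (U x n)" by simp
qed

lemma J_norm:
  assumes s: "\<And>n. \<bar>a n\<bar> \<le> s"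
  shows "norm (J a x) \<le> (2 * s*\<bar>C\<bar>/c) * norm x"
proof -
  have s0: "0 \<le> s" using s[of 0] by simp
  have "c * norm (J a x) \<le> lp_sum_norm p (seq a x)" unfolding J_def using W_norm seq_in[of a s, OF s] by blast
  also have "\<dots> \<le> (2 * s) * lp_sum_norm p (U x)" using seq_in[of a s, OF s] by blast
  also have "\<dots> \<le> (2 * s) * (\<bar>C\<bar> * norm x)"
  proof (rule mult_left_mono)
    have "lp_sum_norm p (U x) \<le> C * norm x" using nrm by blast
    also have "\<dots> \<le> \<bar>C\<bar> * norm x" by (simp add: mult_right_mono)
    finally show "lp_sum_norm p (U x) \<le> \<bar>C\<bar> * norm x" .
  qed (use s0 in simp)
  finally have "c * norm (J a x) \<le> 2 * s * \<bar>C\<bar> * norm x" by simp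
  then show ?thesis using c by (simp add: field_simps)
qed

lemma J_add:
  assumes s: "\<And>n. \<bar>a n\<bar> \<le> s"
  shows "J a (x + y) = J a x + J a y"
proof -
  have "seq a (x + y) = (\<lambda>n. seq a x n + seq a y n)"
  proof
    fix n
    have "Tn n (U x n + U y n) = Tn n (U x n) + Tn n (U y n)"
      using Tn_lin U_coord_in unfolding linear_on_def by blast
    then show "seq a (x + y) n = seq a x n + seq a y n"
      unfolding seq_def U_add by (simp add: scaleR_add_right)
  qed
  then show ?thesis unfolding J_def using W_add seq_in[of a s, OF s] by simp
qed

lemma J_scale:
  assumes s: "\<And>n. \<bar>a n\<bar> \<le> s"
  shows "J a (r *\<^sub>R x) = r *\<^sub>R J a x"
proof -
  have "seq a (r *\<^sub>R x) = (\<lambda>n. r *\<^sub>R seq a x n)"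
  proof
    fix n
    have "Tn n (r *\<^sub>R U x n) = r *\<^sub>R Tn n (U x n)"
      using Tn_lin U_coord_in unfolding linear_on_def by blast
    then show "seq a (r *\<^sub>R x) n = r *\<^sub>R seq a x n"
      unfolding seq_def U_scale by simp
  qed
  then show ?thesis unfolding J_def using W_scale seq_in[of a s, OF s] by simp
qed

lemma J_lin_a:
  assumes s: "\<And>n. \<bar>a n\<bar> \<le> s" and t: "\<And>n. \<bar>b n\<bar> \<le> t"
  shows "J (\<lambda>n. \<alpha> * a n + \<beta> * b n) x = \<alpha> *\<^sub>R J a x + \<beta> *\<^sub>R J b x"
proof -
  have sa: "seq a x \<in> lp_sum p Vs" using seq_in[of a s, OF s] by blast
  have sb: "seq b x \<in> lp_sum p Vs" using seq_in[of b t, OF t] by blast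
  have "seq (\<lambda>n. \<alpha> * a n + \<beta> * b n) x = (\<lambda>n. (\<lambda>n. \<alpha> *\<^sub>R seq a x n) n + (\<lambda>n. \<beta> *\<^sub>R seq b x n) n)"
    unfolding seq_def by (simp add: scaleR_add_left)
  then have "J (\<lambda>n. \<alpha> * a n + \<beta> * b n) x = W (\<lambda>n. \<alpha> *\<^sub>R seq a x n) + W (\<lambda>n. \<beta> *\<^sub>R seq b x n)"
    unfolding J_def using W_add[OF lp_scale_in[OF sa] lp_scale_in[OF sb]] by simp
  also have "\<dots> = \<alpha> *\<^sub>R J a x + \<beta> *\<^sub>R J b x" unfolding J_def using W_scale sa sb by simp
  finally show ?thesis .
qed

end

context lpiso2 begin

lemma c0_bnd: "a \<in> c0 \<Longrightarrow> \<bar>a n\<bar> \<le> sup_norm a" by (rule c0_bound)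

definition dl where "dl n y = (\<lambda>m. if m = n then y else 0)"

lemma dl_in: "y \<in> Vs n \<Longrightarrow> dl n y \<in> lp_sum p Vs \<and> lp_sum_norm p (dl n y) = norm y"
  unfolding dl_def by (rule lp_delta[OF p V0])

lemma tb_Tn_ball:
  assumes M: "M \<ge> 0" shows "tbd (Tn n ` {y\<in>Vs n. norm y \<le> M})"
proof -
  define M' where "M' = M + 1"
  have M': "M' > 0" using M unfolding M'_def by simp
  have "tbd ((\<lambda>z. M' *\<^sub>R z) ` (Tn n ` {y\<in>Vs n. norm y \<le> 1}))"
  proof (rule tbd_image1[OF Tn_tb, of M'])
    show "0 \<le> M'" using M' by simp
    fix u u' :: 'b
    have "dist (M' *\<^sub>R u) (M' *\<^sub>R u') = norm (M' *\<^sub>R (u - u'))"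
      unfolding dist_norm by (simp add: scaleR_diff_right)
    also have "\<dots> = M' * dist u u'" using M' by (simp add: dist_norm)
    finally show "dist (M' *\<^sub>R u) (M' *\<^sub>R u') \<le> M' * dist u u'" by simp
  qed
  moreover have "Tn n ` {y\<in>Vs n. norm y \<le> M} \<subseteq> (\<lambda>z. M' *\<^sub>R z) ` (Tn n ` {y\<in>Vs n. norm y \<le> 1})"
  proof
    fix z assume "z \<in> Tn n ` {y\<in>Vs n. norm y \<le> M}"
    then obtain y where y: "y \<in> Vs n" "norm y \<le> M" "z = Tn n y" by blast
    define y' where "y' = (1/M') *\<^sub>R y"
    have y'V: "y' \<in> Vs n" unfolding y'_def using y(1) sub by (simp add: subspace_scale)
    have "norm y' = norm y / M'" unfolding y'_def using M' by simp
    also have "\<dots> \<le> 1" using y(2) M' unfolding M'_def by simp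
    finally have y'n: "norm y' \<le> 1" .
    have "y = M' *\<^sub>R y'" unfolding y'_def using M' by simp
    then have "Tn n y = M' *\<^sub>R Tn n y'" using Tn_lin y'V unfolding linear_on_def by metis
    then show "z \<in> (\<lambda>z. M' *\<^sub>R z) ` (Tn n ` {y\<in>Vs n. norm y \<le> 1})"
      using y(3) y'V y'n by blast
  qed
  ultimately show ?thesis by (rule tbd_subset)
qed

lemma W_zero: "W (\<lambda>m. 0) = 0"
proof -
  have "U 0 = (\<lambda>m. 0)" using U_scale[of 0 0] by simp
  then show ?thesis using WU[of 0] by simp
qed

lemma J_delta_tb:
  "tbd ((\<lambda>x. J (\<lambda>m. if m = N then a N else 0) x) ` {x. norm x \<le> 1})"
proof -
  define h where "h z = W (dl N (a N *\<^sub>R z))" for z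
  have hx: "J (\<lambda>m. if m = N then a N else 0) x = h (Tn N (U x N))" for x
  proof -
    have "seq (\<lambda>m. if m = N then a N else 0) x = dl N (a N *\<^sub>R Tn N (U x N))"
      unfolding seq_def dl_def by auto
    then show ?thesis unfolding J_def h_def by simp
  qed
  have hlin: "h z - h z' = h (z - z')" if "z \<in> Vs N" "z' \<in> Vs N" for z z'
  proof -
    have in1: "dl N (a N *\<^sub>R z) \<in> lp_sum p Vs" using dl_in that sub by (simp add: subspace_scale)
    have in2: "dl N (a N *\<^sub>R z') \<in> lp_sum p Vs" using dl_in that sub by (simp add: subspace_scale)
    have e1: "dl N (a N *\<^sub>R (z - z')) = (\<lambda>m. dl N (a N *\<^sub>R z) m + (-1) *\<^sub>R dl N (a N *\<^sub>R z') m)"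
      unfolding dl_def by (auto simp: algebra_simps)
    have "h (z - z') = W (\<lambda>m. dl N (a N *\<^sub>R z) m + (-1) *\<^sub>R dl N (a N *\<^sub>R z') m)"
      unfolding h_def e1 ..
    also have "\<dots> = W (dl N (a N *\<^sub>R z)) + W (\<lambda>m. (-1) *\<^sub>R dl N (a N *\<^sub>R z') m)"
      by (rule W_add[OF in1 lp_scale_in[OF in2]])
    also have "W (\<lambda>m. (-1) *\<^sub>R dl N (a N *\<^sub>R z') m) = (-1) *\<^sub>R h z'"
      unfolding h_def by (rule W_scale[OF in2])
    also have "W (dl N (a N *\<^sub>R z)) = h z" unfolding h_def ..
    finally show ?thesis by simp
  qed
  have hnorm: "c * norm (h w) \<le> \<bar>a N\<bar> * norm w" if "w \<in> Vs N" for w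
  proof -
    have "a N *\<^sub>R w \<in> Vs N" using that sub by (simp add: subspace_scale)
    then have "dl N (a N *\<^sub>R w) \<in> lp_sum p Vs" "lp_sum_norm p (dl N (a N *\<^sub>R w)) = \<bar>a N\<bar> * norm w"
      using dl_in by auto
    then show ?thesis unfolding h_def using W_norm by metis
  qed
  have "tbd (h ` (Tn N ` {y\<in>Vs N. norm y \<le> \<bar>C\<bar>}))"
  proof (rule tbd_image1[OF tb_Tn_ball, of _ "\<bar>a N\<bar> / c"])
    show "0 \<le> \<bar>C\<bar>" by simp
    show "0 \<le> \<bar>a N\<bar> / c" using c by simp
    fix u u' assume u: "u \<in> Tn N ` {y\<in>Vs N. norm y \<le> \<bar>C\<bar>}" and u': "u' \<in> Tn N ` {y\<in>Vs N. norm y \<le> \<bar>C\<bar>}"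
    have uV: "u \<in> Vs N" "u' \<in> Vs N" using u u' Tn_map by auto
    have "dist (h u) (h u') = norm (h (u - u'))" unfolding dist_norm hlin[OF uV] ..
    also have "\<dots> \<le> \<bar>a N\<bar> * norm (u - u') / c"
      using hnorm[of "u - u'"] uV sub c by (simp add: subspace_diff field_simps)
    finally show "dist (h u) (h u') \<le> \<bar>a N\<bar> / c * dist u u'" by (simp add: dist_norm)
  qed
  moreover have "(\<lambda>x. J (\<lambda>m. if m = N then a N else 0) x) ` {x. norm x \<le> 1} \<subseteq> h ` (Tn N ` {y\<in>Vs N. norm y \<le> \<bar>C\<bar>})"
  proof
    fix z assume "z \<in> (\<lambda>x. J (\<lambda>m. if m = N then a N else 0) x) ` {x. norm x \<le> 1}"
    then obtain x where x: "norm x \<le> 1" "z = J (\<lambda>m. if m = N then a N else 0) x" by blast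
    have "norm (U x N) \<le> \<bar>C\<bar> * norm x" by (rule U_coord)
    also have "\<dots> \<le> \<bar>C\<bar>" using x(1) by (simp add: mult_left_le)
    finally have "U x N \<in> {y\<in>Vs N. norm y \<le> \<bar>C\<bar>}" using U_coord_in by simp
    then show "z \<in> h ` (Tn N ` {y\<in>Vs N. norm y \<le> \<bar>C\<bar>})" unfolding x(2) hx by blast
  qed
  ultimately show ?thesis by (rule tbd_subset)
qed

lemma J_fin_tb:
  assumes a: "a \<in> c0"
  shows "tbd ((\<lambda>x. J (\<lambda>m. if m < N then a m else 0) x) ` {x. norm x \<le> 1})"
proof (induction N)
  case 0
  have "(\<lambda>x. J (\<lambda>m. if m < 0 then a m else 0) x) ` {x. norm x \<le> 1} \<subseteq> {0}"
    unfolding J_def seq_def using W_zero by auto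
  then show ?case using tbd_zero tbd_subset by blast
next
  case (Suc N)
  let ?a1 = "\<lambda>m. if m < N then a m else 0"
  let ?e = "\<lambda>m. if m = N then a N else 0"
  have b1: "\<And>n. \<bar>?a1 n\<bar> \<le> sup_norm a" using c0_bnd[OF a] sup_norm_nonneg[OF a] by simp
  have b2: "\<And>n. \<bar>?e n\<bar> \<le> sup_norm a" using c0_bnd[OF a] sup_norm_nonneg[OF a] by simp
  have eq: "(\<lambda>m. if m < Suc N then a m else 0) = (\<lambda>n. 1 * ?a1 n + 1 * ?e n)" by auto
  have Jx: "J (\<lambda>m. if m < Suc N then a m else 0) x = J ?a1 x + J ?e x" for x
    unfolding eq using J_lin_a[of ?a1 "sup_norm a" ?e "sup_norm a" 1 1 x, OF b1 b2] by simp
  have "tbd {u + v | u v. u \<in> (\<lambda>x. J ?a1 x) ` {x. norm x \<le> 1} \<and> v \<in> (\<lambda>x. J ?e x) ` {x. norm x \<le> 1}}"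
  proof (rule tbd_image2[OF Suc.IH J_delta_tb, of 1])
    fix u u' v v' :: 'a
    have "dist (u + v) (u' + v') = norm ((u - u') + (v - v'))" by (simp add: dist_norm algebra_simps)
    also have "\<dots> \<le> dist u u' + dist v v'" by (simp add: dist_norm norm_triangle_ineq)
    finally show "dist (u + v) (u' + v') \<le> 1 * (dist u u' + dist v v')" by simp
  qed simp
  moreover have "(\<lambda>x. J (\<lambda>m. if m < Suc N then a m else 0) x) ` {x. norm x \<le> 1} \<subseteq>
      {u + v | u v. u \<in> (\<lambda>x. J ?a1 x) ` {x. norm x \<le> 1} \<and> v \<in> (\<lambda>x. J ?e x) ` {x. norm x \<le> 1}}"
  proof
    fix z assume "z \<in> (\<lambda>x. J (\<lambda>m. if m < Suc N then a m else 0) x) ` {x. norm x \<le> 1}"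
    then obtain x where x: "norm x \<le> 1" "z = J (\<lambda>m. if m < Suc N then a m else 0) x" by blast
    have "J ?a1 x \<in> (\<lambda>x. J ?a1 x) ` {x. norm x \<le> 1}" "J ?e x \<in> (\<lambda>x. J ?e x) ` {x. norm x \<le> 1}"
      using x(1) by auto
    then show "z \<in> {u + v | u v. u \<in> (\<lambda>x. J ?a1 x) ` {x. norm x \<le> 1} \<and> v \<in> (\<lambda>x. J ?e x) ` {x. norm x \<le> 1}}"
      unfolding x(2) Jx by blast
  qed
  ultimately show ?case by (rule tbd_subset)
qed

lemma J_bop:
  assumes a: "a \<in> c0" shows "bounded_op UNIV (J a)"
proof -
  have b: "\<And>n. \<bar>a n\<bar> \<le> sup_norm a" using c0_bnd[OF a] .
  have "linear_on UNIV (J a)" unfolding linear_on_def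
    using J_add[of a "sup_norm a", OF b] J_scale[of a "sup_norm a", OF b] by blast
  moreover have "\<forall>x\<in>UNIV. norm (J a x) \<le> (2 * sup_norm a * \<bar>C\<bar> / c) * norm x"
    using J_norm[of a "sup_norm a", OF b] by blast
  ultimately show ?thesis unfolding bounded_op_def by blast
qed

lemma J_compact:
  assumes a: "a \<in> c0" shows "compact_op UNIV (J a)"
proof -
  have "tbd ((J a) ` {x. norm x \<le> 1})"
  proof (rule tbI)
    fix e :: real assume e: "e > 0"
    define K where "K = \<bar>C\<bar> + 1"
    have K: "K > 0" "\<bar>C\<bar> \<le> K" unfolding K_def by auto
    define \<epsilon> where "\<epsilon> = e * c / (8 * K)"
    have \<epsilon>: "\<epsilon> > 0" unfolding \<epsilon>_def using e c K by simp
    have "a \<longlonglongrightarrow> 0" using a unfolding c0_def by simp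
    then obtain N where N: "\<And>n. n \<ge> N \<Longrightarrow> \<bar>a n\<bar> < \<epsilon>" using LIMSEQ_D[OF _ \<epsilon>] by fastforce
    let ?a1 = "\<lambda>m. if m < N then a m else 0"
    let ?a2 = "\<lambda>m. if m < N then 0 else a m"
    have b1: "\<And>n. \<bar>?a1 n\<bar> \<le> sup_norm a" using c0_bnd[OF a] sup_norm_nonneg[OF a] by simp
    have b2: "\<And>n. \<bar>?a2 n\<bar> \<le> \<epsilon>" using N \<epsilon> by (simp add: less_imp_le)
    have eq: "a = (\<lambda>n. 1 * ?a1 n + 1 * ?a2 n)" by auto
    have Jx: "J a x = J ?a1 x + J ?a2 x" for x
      by (subst eq) (use J_lin_a[of ?a1 "sup_norm a" ?a2 \<epsilon> 1 1 x, OF b1 b2] in simp)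
    have small: "norm (J ?a2 x) < e/2" if "norm x \<le> 1" for x
    proof -
      have "norm (J ?a2 x) \<le> (2 * \<epsilon> * \<bar>C\<bar> / c) * norm x" by (rule J_norm[of ?a2 \<epsilon>, OF b2])
      also have "\<dots> \<le> (2 * \<epsilon> * \<bar>C\<bar> / c) * 1" using that \<epsilon> c by (intro mult_left_mono) auto
      also have "\<dots> = 2 * \<epsilon> * \<bar>C\<bar> / c" by simp
      also have "\<dots> \<le> 2 * \<epsilon> * K / c" using \<epsilon> c K by (intro divide_right_mono mult_left_mono) auto
      also have "2 * \<epsilon> * K / c = 2 * (\<epsilon> * K) / c" by simp
      also have "\<epsilon> * K = e * c / 8" unfolding \<epsilon>_def using K by simp
      also have "2 * (e * c / 8) / c = e / 4" using c by simp
      also have "\<dots> < e / 2" using e by simp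
      finally show ?thesis .
    qed
    obtain k where k: "finite k" "k \<subseteq> (\<lambda>x. J ?a1 x) ` {x. norm x \<le> 1}"
      "(\<lambda>x. J ?a1 x) ` {x. norm x \<le> 1} \<subseteq> (\<Union>x\<in>k. ball x (e/2))"
      using J_fin_tb[OF a, of N] e unfolding tbd_def by (meson half_gt_zero)
    show "\<exists>k. finite k \<and> J a ` {x. norm x \<le> 1} \<subseteq> (\<Union>x\<in>k. ball x e)"
    proof (intro exI conjI)
      show "finite k" by fact
      show "J a ` {x. norm x \<le> 1} \<subseteq> (\<Union>x\<in>k. ball x e)"
      proof
        fix z assume "z \<in> J a ` {x. norm x \<le> 1}"
        then obtain x where x: "norm x \<le> 1" "z = J a x" by blast
        have "J ?a1 x \<in> (\<lambda>x. J ?a1 x) ` {x. norm x \<le> 1}" using x(1) by blast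
        then obtain w where w: "w \<in> k" "dist w (J ?a1 x) < e/2" using k(3) by auto
        have "dist w z \<le> dist w (J ?a1 x) + dist (J ?a1 x) z" by (rule dist_triangle)
        also have "dist (J ?a1 x) z = norm (J ?a2 x)" unfolding x(2) Jx by (simp add: dist_norm)
        finally have "dist w z < e" using w(2) small[OF x(1)] by simp
        then show "z \<in> (\<Union>x\<in>k. ball x e)" using w(1) by auto
      qed
    qed
  qed
  then show ?thesis unfolding compact_op_def using J_bop[OF a] tbd_compact_closure by simp
qed

end

context lpiso2 begin

lemma fr_compress:
  assumes G: "finite_rank_op UNIV G"
  shows "finite_rank_op (Vs n) (\<lambda>y. U (G (W (dl n y))) n)"
proof -
  have bG: "bounded_op UNIV G" using G unfolding finite_rank_op_def by blast
  obtain K where K0: "K \<ge> 0" "\<And>x. x \<in> UNIV \<Longrightarrow> norm (G x) \<le> K * norm x" using bop_boundE[OF bG] by blast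
  have K: "K \<ge> 0" "\<And>x. norm (G x) \<le> K * norm x" using K0 by auto
  obtain B where B: "finite B" "G ` UNIV \<subseteq> span B" using G unfolding finite_rank_op_def by blast
  have linG: "linear_on UNIV G" using bG unfolding bounded_op_def by blast
  let ?G = "\<lambda>y. U (G (W (dl n y))) n"
  have lin: "linear_on (Vs n) ?G" unfolding linear_on_def
  proof (intro conjI ballI allI)
    fix y y' assume y: "y \<in> Vs n" "y' \<in> Vs n"
    have d1: "dl n y \<in> lp_sum p Vs" "dl n y' \<in> lp_sum p Vs" using dl_in y by auto
    have "dl n (y + y') = (\<lambda>m. dl n y m + dl n y' m)" unfolding dl_def by auto
    then have "W (dl n (y + y')) = W (dl n y) + W (dl n y')" using W_add[OF d1] by simp
    moreover have "G (W (dl n y) + W (dl n y')) = G (W (dl n y)) + G (W (dl n y'))"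
      using linG unfolding linear_on_def by simp
    ultimately show "?G (y + y') = ?G y + ?G y'" by (simp add: U_add)
  next
    fix r y assume y: "y \<in> Vs n"
    have d1: "dl n y \<in> lp_sum p Vs" using dl_in y by auto
    have "dl n (r *\<^sub>R y) = (\<lambda>m. r *\<^sub>R dl n y m)" unfolding dl_def by auto
    then have "W (dl n (r *\<^sub>R y)) = r *\<^sub>R W (dl n y)" using W_scale[OF d1] by simp
    moreover have "G (r *\<^sub>R W (dl n y)) = r *\<^sub>R G (W (dl n y))"
      using linG unfolding linear_on_def by simp
    ultimately show "?G (r *\<^sub>R y) = r *\<^sub>R ?G y" by (simp add: U_scale)
  qed
  have map: "?G ` Vs n \<subseteq> Vs n" using U_coord_in by blast
  have bnd: "\<forall>y\<in>Vs n. norm (?G y) \<le> (\<bar>C\<bar> * K / c) * norm y"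
  proof
    fix y assume y: "y \<in> Vs n"
    have d: "dl n y \<in> lp_sum p Vs" "lp_sum_norm p (dl n y) = norm y" using dl_in[OF y] by auto
    have cw: "c * norm (W (dl n y)) \<le> norm y" using W_norm[OF d(1)] d(2) by simp
    have "norm (?G y) \<le> \<bar>C\<bar> * norm (G (W (dl n y)))" by (rule U_coord)
    also have "\<dots> \<le> \<bar>C\<bar> * (K * norm (W (dl n y)))" using K(2) by (intro mult_left_mono) auto
    also have "\<dots> = (\<bar>C\<bar> * K / c) * (c * norm (W (dl n y)))" using c by simp
    also have "\<dots> \<le> (\<bar>C\<bar> * K / c) * norm y" using cw K c by (intro mult_left_mono) auto
    finally show "norm (?G y) \<le> (\<bar>C\<bar> * K / c) * norm y" .
  qed
  have fin: "?G ` Vs n \<subseteq> span ((\<lambda>z. U z n) ` B)"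
  proof
    fix w assume "w \<in> ?G ` Vs n"
    then obtain y where "w = ?G y" by blast
    moreover have "G (W (dl n y)) \<in> span B" using B(2) by blast
    ultimately have "w \<in> (\<lambda>z. U z n) ` span B" by blast
    then show "w \<in> span ((\<lambda>z. U z n) ` B)" using span_linear_image[OF Uc_linear] by blast
  qed
  show ?thesis unfolding finite_rank_op_def bounded_op_def
    by (intro conjI exI[of _ "(\<lambda>z. U z n) ` B"] exI[of _ "\<bar>C\<bar> * K / c"] lin map bnd fin) (use B(1) in simp)
qed

lemma lower:
  assumes a: "a \<in> c0" and R: "approximable_op UNIV R"
  shows "c / (\<bar>C\<bar> + 1) * \<bar>a n\<bar> \<le> opnorm UNIV (\<lambda>x. J a x - R x)"
proof -
  define X where "X = opnorm UNIV (\<lambda>x. J a x - R x)"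
  have bR: "bounded_op UNIV R" using R unfolding approximable_op_def by blast
  have bJR: "bounded_op UNIV (\<lambda>x. J a x - R x)" by (rule bop_diff[OF subspace_UNIV J_bop[OF a] bR])
  obtain KJ where KJ: "\<And>x. x \<in> UNIV \<Longrightarrow> norm (J a x - R x) \<le> KJ * norm x" using bop_boundE[OF bJR] by blast
  have KJ': "\<forall>x\<in>UNIV. norm (J a x - R x) \<le> KJ * norm x" using KJ by blast
  have X0: "0 \<le> X" unfolding X_def by (rule opnorm_nonneg[OF KJ']) simp
  have linJR: "linear_on UNIV (\<lambda>x. J a x - R x)" using bJR unfolding bounded_op_def by blast
  have Cp: "0 < \<bar>C\<bar> + 1" by simp
  show ?thesis unfolding X_def[symmetric]
  proof (rule field_le_epsilon)
    fix e :: real assume e: "e > 0"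
    obtain G where G: "finite_rank_op UNIV G" "opnorm UNIV (\<lambda>x. R x - G x) < e"
      using R e unfolding approximable_op_def by blast
    have bRG: "bounded_op UNIV (\<lambda>x. R x - G x)"
      using bop_diff[OF subspace_UNIV bR] G(1) unfolding finite_rank_op_def by blast
    obtain KG where KG: "\<And>x. x \<in> UNIV \<Longrightarrow> norm (R x - G x) \<le> KG * norm x" using bop_boundE[OF bRG] by blast
    have KG': "\<forall>x\<in>UNIV. norm (R x - G x) \<le> KG * norm x" using KG by blast
    have linRG: "linear_on UNIV (\<lambda>x. R x - G x)" using bRG unfolding bounded_op_def by blast
    let ?G = "\<lambda>y. U (G (W (dl n y))) n"
    show "c / (\<bar>C\<bar> + 1) * \<bar>a n\<bar> \<le> X + e"
    proof (cases "a n = 0")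
      case True then show ?thesis using X0 e by simp
    next
      case False
      then have an: "\<bar>a n\<bar> > 0" by simp
      define M0 where "M0 = \<bar>C\<bar> * (X + e) / c"
      have key: "norm (a n *\<^sub>R Tn n y - ?G y) \<le> M0" if y: "y \<in> Vs n" "norm y \<le> 1" for y
      proof -
        define x where "x = W (dl n y)"
        have d: "dl n y \<in> lp_sum p Vs" "lp_sum_norm p (dl n y) = norm y" using dl_in[OF y(1)] by auto
        have cx: "c * norm x \<le> 1" using W_norm[OF d(1)] d(2) y(2) unfolding x_def by simp
        have "U x = dl n y" unfolding x_def by (rule UW[OF d(1)])
        then have Uxn: "U x n = y" by (simp add: dl_def)
        have bnd_a: "\<And>m. \<bar>a m\<bar> \<le> sup_norm a" using c0_bnd[OF a] .
        have UJ: "U (J a x) = seq a x" unfolding J_def using UW seq_in[of a "sup_norm a", OF bnd_a] by blast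
        have eqn0: "U (J a x - G x) n = a n *\<^sub>R Tn n y - U (G x) n"
          by (simp add: U_diff UJ seq_def Uxn)
        have eqn: "U (J a x - G x) n = a n *\<^sub>R Tn n y - ?G y"
          using eqn0 by (simp add: x_def)
        have "norm (a n *\<^sub>R Tn n y - ?G y) \<le> \<bar>C\<bar> * norm (J a x - G x)"
          unfolding eqn[symmetric] by (rule U_coord)
        also have "norm (J a x - G x) \<le> norm (J a x - R x) + norm (R x - G x)"
          using norm_triangle_ineq[of "J a x - R x" "R x - G x"] by simp
        also have "norm (J a x - R x) \<le> X * norm x"
          unfolding X_def by (rule opnorm_bound[OF subspace_UNIV linJR KJ']) simp
        also have "norm (R x - G x) \<le> opnorm UNIV (\<lambda>x. R x - G x) * norm x"
          by (rule opnorm_bound[OF subspace_UNIV linRG KG']) simp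
        also have "opnorm UNIV (\<lambda>x. R x - G x) * norm x \<le> e * norm x"
          using G(2) by (intro mult_right_mono) auto
        also have "X * norm x + e * norm x = (X + e) * norm x" by (simp add: algebra_simps)
        also have "(X + e) * norm x \<le> (X + e) * (1 / c)"
          using cx c X0 e by (intro mult_left_mono) (auto simp: field_simps)
        finally show ?thesis unfolding M0_def using c by (simp add: mult_left_mono)
      qed
      have H: "finite_rank_op (Vs n) (\<lambda>y. (1 / a n) *\<^sub>R ?G y)"
        by (rule fr_scale[OF sub fr_compress[OF G(1)]])
      have "1 \<le> opnorm (Vs n) (\<lambda>y. Tn n y - (1 / a n) *\<^sub>R ?G y)" by (rule Tn_low[OF H])
      also have "\<dots> \<le> M0 / \<bar>a n\<bar>"
      proof (rule opnorm_le)
        show "0 \<in> Vs n" using V0 by blast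
        fix y assume y: "y \<in> Vs n" "norm y \<le> 1"
        have "Tn n y - (1 / a n) *\<^sub>R ?G y = (1 / a n) *\<^sub>R (a n *\<^sub>R Tn n y - ?G y)"
          using False by (simp add: algebra_simps)
        then have "norm (Tn n y - (1 / a n) *\<^sub>R ?G y) = norm (a n *\<^sub>R Tn n y - ?G y) / \<bar>a n\<bar>"
          by simp
        also have "\<dots> \<le> M0 / \<bar>a n\<bar>" using key[OF y] an by (intro divide_right_mono) auto
        finally show "norm (Tn n y - (1 / a n) *\<^sub>R ?G y) \<le> M0 / \<bar>a n\<bar>" .
      qed
      finally have "\<bar>a n\<bar> \<le> M0" using an by (simp add: field_simps)
      then have "c * \<bar>a n\<bar> \<le> \<bar>C\<bar> * (X + e)" unfolding M0_def using c by (simp add: field_simps)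
      also have "\<dots> \<le> (\<bar>C\<bar> + 1) * (X + e)" using X0 e by (intro mult_right_mono) auto
      finally have "c * \<bar>a n\<bar> \<le> (\<bar>C\<bar> + 1) * (X + e)" .
      then show ?thesis using Cp by (simp add: field_simps)
    qed
  qed
qed

lemma main: "KA_contains_c0 (UNIV :: 'a set)"
  unfolding KA_contains_c0_def
proof (rule exI[of _ J], rule exI[of _ "c / (\<bar>C\<bar> + 1)"], rule exI[of _ "2 * \<bar>C\<bar> / c"], intro conjI ballI allI)
  show "0 < c / (\<bar>C\<bar> + 1)" using c by simp
  fix a assume a: "a \<in> c0"
  show "compact_op UNIV (J a)" by (rule J_compact[OF a])
  have bnd_a: "\<And>m. \<bar>a m\<bar> \<le> sup_norm a" using c0_bnd[OF a] .
  define Q where "Q = {opnorm UNIV (\<lambda>x. J a x - R x) | R. approximable_op UNIV R}"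
  have qn: "quot_norm UNIV (J a) = Inf Q" unfolding quot_norm_def Q_def ..
  have Qmem: "\<exists>R. approximable_op UNIV R \<and> z = opnorm UNIV (\<lambda>x. J a x - R x)" if "z \<in> Q" for z
    using that unfolding Q_def by blast
  have z0: "opnorm UNIV (\<lambda>x. J a x - 0) \<in> Q" unfolding Q_def
    by (rule CollectI, rule exI[of _ "\<lambda>x. 0"]) (simp add: approx_zero[OF subspace_UNIV])
  have Qne: "Q \<noteq> {}" using z0 by blast
  have Qnn: "0 \<le> opnorm UNIV (\<lambda>x. J a x - R x)" if R: "approximable_op UNIV R" for R
  proof -
    have bR: "bounded_op UNIV R" using R unfolding approximable_op_def by blast
    have bJR: "bounded_op UNIV (\<lambda>x. J a x - R x)" by (rule bop_diff[OF subspace_UNIV J_bop[OF a] bR])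
    obtain KJ where KJ: "\<And>x. x \<in> UNIV \<Longrightarrow> norm (J a x - R x) \<le> KJ * norm x" using bop_boundE[OF bJR] by blast
    have KJ': "\<forall>x\<in>UNIV. norm (J a x - R x) \<le> KJ * norm x" using KJ by blast
    show ?thesis by (rule opnorm_nonneg[OF KJ']) simp
  qed
  have Qbdd: "bdd_below Q"
  proof (rule bdd_belowI[of _ 0])
    fix z assume "z \<in> Q" then show "0 \<le> z" using Qmem Qnn by metis
  qed
  have "c / (\<bar>C\<bar> + 1) * sup_norm a \<le> Inf Q"
  proof (rule cInf_greatest[OF Qne])
    fix z assume "z \<in> Q"
    then obtain R where R: "approximable_op UNIV R" "z = opnorm UNIV (\<lambda>x. J a x - R x)" using Qmem by blast
    have cp: "0 < c / (\<bar>C\<bar> + 1)" using c by simp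
    have "sup_norm a \<le> z / (c / (\<bar>C\<bar> + 1))" unfolding sup_norm_def
    proof (rule cSup_least)
      show "range (\<lambda>n. \<bar>a n\<bar>) \<noteq> {}" by simp
      fix t assume "t \<in> range (\<lambda>n. \<bar>a n\<bar>)"
      then obtain n where t: "t = \<bar>a n\<bar>" by blast
      have "c / (\<bar>C\<bar> + 1) * \<bar>a n\<bar> \<le> z" using lower[OF a R(1), of n] R(2) by simp
      then have h1: "\<bar>a n\<bar> * (c / (\<bar>C\<bar> + 1)) \<le> z" by (simp only: mult.commute)
      show "t \<le> z / (c / (\<bar>C\<bar> + 1))" unfolding t pos_le_divide_eq[OF cp] by (rule h1)
    qed
    then have "sup_norm a * (c / (\<bar>C\<bar> + 1)) \<le> z" unfolding pos_le_divide_eq[OF cp] .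
    then show "c / (\<bar>C\<bar> + 1) * sup_norm a \<le> z" by (simp only: mult.commute)
  qed
  then show "c / (\<bar>C\<bar> + 1) * sup_norm a \<le> quot_norm UNIV (J a)" unfolding qn .
  have "Inf Q \<le> opnorm UNIV (\<lambda>x. J a x - 0)" by (rule cInf_lower[OF z0 Qbdd])
  also have "\<dots> \<le> 2 * \<bar>C\<bar> / c * sup_norm a"
  proof (rule opnorm_le)
    show "(0::'a) \<in> UNIV" by simp
    fix x :: 'a assume x: "x \<in> UNIV" "norm x \<le> 1"
    have "norm (J a x - 0) \<le> (2 * sup_norm a * \<bar>C\<bar> / c) * norm x" using J_norm[of a "sup_norm a", OF bnd_a] by simp
    also have "\<dots> \<le> (2 * sup_norm a * \<bar>C\<bar> / c) * 1"
      using x(2) sup_norm_nonneg[OF a] c by (intro mult_left_mono) auto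
    also have "\<dots> = 2 * \<bar>C\<bar> / c * sup_norm a" by simp
    finally show "norm (J a x - 0) \<le> 2 * \<bar>C\<bar> / c * sup_norm a" .
  qed
  finally have up: "Inf Q \<le> 2 * \<bar>C\<bar> / c * sup_norm a" .
  show "quot_norm UNIV (J a) \<le> 2 * \<bar>C\<bar> / c * sup_norm a" using up qn by simp
next
  fix a b \<alpha> \<beta> assume a: "a \<in> c0" and b: "b \<in> c0"
  have ba: "\<And>m. \<bar>a m\<bar> \<le> sup_norm a" using c0_bnd[OF a] .
  have bb: "\<And>m. \<bar>b m\<bar> \<le> sup_norm b" using c0_bnd[OF b] .
  have "(\<lambda>x. J (\<lambda>n. \<alpha> * a n + \<beta> * b n) x - (\<alpha> *\<^sub>R J a x + \<beta> *\<^sub>R J b x)) = (\<lambda>x. 0)"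
    using J_lin_a[of a "sup_norm a" b "sup_norm b", OF ba bb] by simp
  then show "approximable_op UNIV (\<lambda>x. J (\<lambda>n. \<alpha> * a n + \<beta> * b n) x - (\<alpha> *\<^sub>R J a x + \<beta> *\<^sub>R J b x))"
    using approx_zero[OF subspace_UNIV] by simp
qed

end

theorem corollary2p3:
  fixes p :: ereal
  assumes p: "1 \<le> p"
  assumes hyp:
    "(\<exists>Xs :: nat \<Rightarrow> 'b::banach set.
        (\<forall>n. subspace (Xs n) \<and> closed (Xs n) \<and> KA_nontrivial (Xs n)) \<and>
        isometric_to_lp_sum TYPE('a::banach) p Xs)
     \<or> (KA_nontrivial (UNIV :: 'a set) \<and>
        isomorphic_to_lp_sum TYPE('a) p (\<lambda>n. UNIV :: 'a set))"
  shows "KA_contains_c0 (UNIV :: 'a set)"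
  using hyp
proof (elim disjE exE conjE)
  fix Xs :: "nat \<Rightarrow> 'b set"
  assume H: "\<forall>n. subspace (Xs n) \<and> closed (Xs n) \<and> KA_nontrivial (Xs n)"
    and I: "isometric_to_lp_sum TYPE('a) p Xs"
  obtain U :: "'a \<Rightarrow> nat \<Rightarrow> 'b" where U: "lin_bij_to_lp_sum p Xs U" "\<forall>x. lp_sum_norm p (U x) = norm x"
    using I unfolding isometric_to_lp_sum_def by blast
  interpret lpiso2 p Xs U 1 1
    by unfold_locales (use p H U in auto)
  show ?thesis by (rule main)
next
  assume nt: "KA_nontrivial (UNIV :: 'a set)"
    and I: "isomorphic_to_lp_sum TYPE('a) p (\<lambda>n. UNIV :: 'a set)"
  obtain U :: "'a \<Rightarrow> nat \<Rightarrow> 'a" and c C where U: "lin_bij_to_lp_sum p (\<lambda>n. UNIV) U" "0 < c"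
    "\<forall>x. c * norm x \<le> lp_sum_norm p (U x) \<and> lp_sum_norm p (U x) \<le> C * norm x"
    using I unfolding isomorphic_to_lp_sum_def by blast
  interpret lpiso2 p "\<lambda>n. UNIV :: 'a set" U c C
    by unfold_locales (use p nt U in auto)
  show ?thesis by (rule main)
qed

end
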